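(* Let $A$ be a uniform Kan complex, $\pi:B\to A^{\mathrm{I}}$ a uniform Kan fibration, and $b:A\to B$ a map with $\pi\circ b=r$, where $r:A\to A^{\mathrm{I}}$ is the constant-path map. Then there is a map $j:A^{\mathrm{I}}\to B$ with $\pi\circ j=1_{A^{\mathrm{I}}}$.
   Context: Let $\mathbb{B}$ be the category of finite sets $[n]=\{\bot,x_1,\dots,x_n,\top\}$ ($n\ge0$, $\bot\ne\top$) and functions preserving $\bot,\top$; cartesian cubical sets are presheaves on $\mathbb{B}^{op}$. $\mathrm{I}^n$ is the representable on $[n]$, $\mathrm{I}^n\cong\mathrm{I}\times\dots\times\mathrm{I}$, $\mathrm{I}=\mathrm{I}^1$, $\mathrm{I}^0=1$; the two maps $[1]\to[0]$ give endpoints $0,1:1\to\mathrm{I}$. $A^{\mathrm{I}}$ is the exponential and $r:A\to A^{\mathrm{I}}$ is induced by $\mathrm{I}\to1$. For $1\le i\le n$, $d\in\{0,1\}$, the face $\alpha_i^d:\mathrm{I}^{n-1}\to\mathrm{I}^n$ inserts $d$ in coordinate $i$; for $e\in\{0,1\}$ the open box $\sqcup^n_e\rightarrowtail\mathrm{I}^n$ is the union of the images of all faces $\alpha_i^d$ with $(i,d)\ne(1,e)$, with inclusion $i^n_e$. A uniform Kan fibration structure on $f:Y\to X$ consists of, for each $n\ge1$, $e\in\{0,1\}$, $k\ge1$ and each commutative square $b':\mathrm{I}^k\times\sqcup^n_e\to Y$, $a:\mathrm{I}^k\times\mathrm{I}^n\to X$ with $fb'=a(1\times i^n_e)$, a chosen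 filler $\phi(a,b'):\mathrm{I}^k\times\mathrm{I}^n\to Y$ with $\phi(a,b')(1\times i^n_e)=b'$ and $f\phi(a,b')=a$, such that $\phi(a,b')\circ(\alpha\times1)=\phi(a(\alpha\times1),b'(\alpha\times1))$ for all $\alpha:\mathrm{I}^j\to\mathrm{I}^k$ ($j\ge1$). A uniform Kan complex is a cubical set $A$ with a uniform Kan fibration structure on $A\to1$. *)

theory Defs
  imports Main
begin

text \<open>Elements of [n] = {bot, x_1, ..., x_n, top}: Bot, Top, and Var i for 0 <= i < n
  (Var i stands for x_(i+1)).\<close>
datatype pt = Bot | Top | Var nat

definition pts :: "nat \<Rightarrow> pt set" where
  "pts n = {Bot, Top} \<union> Var ` {..<n}"

text \<open>A morphism [m] -> [n] of B preserving bot and top is determined by the images of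
  x_1..x_m; it is stored as a function nat => pt (value at index i = image of x_(i+1)),
  canonically Bot at indices >= m.\<close>
definition hom :: "nat \<Rightarrow> nat \<Rightarrow> (nat \<Rightarrow> pt) set" where
  "hom m n = {f. (\<forall>i<m. f i \<in> pts n) \<and> (\<forall>i\<ge>m. f i = Bot)}"

fun ext :: "(nat \<Rightarrow> pt) \<Rightarrow> pt \<Rightarrow> pt" where
  "ext g Bot = Bot" | "ext g Top = Top" | "ext g (Var j) = g j"

definition bcomp :: "(nat \<Rightarrow> pt) \<Rightarrow> (nat \<Rightarrow> pt) \<Rightarrow> (nat \<Rightarrow> pt)" where
  "bcomp g f = ext g \<circ> f"

definition bid :: "nat \<Rightarrow> (nat \<Rightarrow> pt)" where
  "bid n = (\<lambda>i. if i < n then Var i else Bot)"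

section \<open>Cartesian cubical sets (functors B -> Set, i.e. presheaves on B^op)\<close>

text \<open>act X m n f x : the action X(f) : X(m) -> X(n) of f \<in> hom m n.\<close>
record 'a cset =
  carrier :: "nat \<Rightarrow> 'a set"
  act :: "nat \<Rightarrow> nat \<Rightarrow> (nat \<Rightarrow> pt) \<Rightarrow> 'a \<Rightarrow> 'a"

definition is_cset :: "'a cset \<Rightarrow> bool" where
  "is_cset X \<longleftrightarrow>
     (\<forall>m n f x. f \<in> hom m n \<longrightarrow> x \<in> carrier X m \<longrightarrow> act X m n f x \<in> carrier X n) \<and>
     (\<forall>m x. x \<in> carrier X m \<longrightarrow> act X m m (bid m) x = x) \<and>
     (\<forall>m n p f g x. f \<in> hom m n \<longrightarrow> g \<in> hom n p \<longrightarrow> x \<in> carrier X m \<longrightarrow>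
        act X n p g (act X m n f x) = act X m p (bcomp g f) x)"

text \<open>Morphisms (natural transformations), represented extensionally
  (value undefined outside the carrier).\<close>
definition morphism :: "'a cset \<Rightarrow> 'b cset \<Rightarrow> (nat \<Rightarrow> 'a \<Rightarrow> 'b) \<Rightarrow> bool" where
  "morphism X Y h \<longleftrightarrow>
     (\<forall>m x. x \<in> carrier X m \<longrightarrow> h m x \<in> carrier Y m) \<and>
     (\<forall>m n f x. f \<in> hom m n \<longrightarrow> x \<in> carrier X m \<longrightarrow> h n (act X m n f x) = act Y m n f (h m x)) \<and>
     (\<forall>m x. x \<notin> carrier X m \<longrightarrow> h m x = undefined)"

definition mid :: "'a cset \<Rightarrow> (nat \<Rightarrow> 'a \<Rightarrow> 'a)" where
  "mid X = (\<lambda>m x. if x \<in> carrier X m then x else undefined)"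

definition mcomp :: "'a cset \<Rightarrow> (nat \<Rightarrow> 'b \<Rightarrow> 'c) \<Rightarrow> (nat \<Rightarrow> 'a \<Rightarrow> 'b) \<Rightarrow> (nat \<Rightarrow> 'a \<Rightarrow> 'c)" where
  "mcomp X g h = (\<lambda>m x. if x \<in> carrier X m then g m (h m x) else undefined)"

definition terminal :: "unit cset" where
  "terminal = \<lparr>carrier = (\<lambda>m. {()}), act = (\<lambda>m n f x. ())\<rparr>"

definition to_terminal :: "'a cset \<Rightarrow> (nat \<Rightarrow> 'a \<Rightarrow> unit)" where
  "to_terminal X = (\<lambda>m x. if x \<in> carrier X m then () else undefined)"

definition cprod :: "'a cset \<Rightarrow> 'b cset \<Rightarrow> ('a \<times> 'b) cset" where
  "cprod X Y = \<lparr>carrier = (\<lambda>m. carrier X m \<times> carrier Y m),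
                act = (\<lambda>m n f p. (act X m n f (fst p), act Y m n f (snd p)))\<rparr>"

definition mprod :: "'a cset \<Rightarrow> 'b cset \<Rightarrow> (nat \<Rightarrow> 'a \<Rightarrow> 'c) \<Rightarrow> (nat \<Rightarrow> 'b \<Rightarrow> 'd)
    \<Rightarrow> (nat \<Rightarrow> 'a \<times> 'b \<Rightarrow> 'c \<times> 'd)" where
  "mprod X1 X2 h1 h2 = (\<lambda>m p. if p \<in> carrier X1 m \<times> carrier X2 m
                                then (h1 m (fst p), h2 m (snd p)) else undefined)"

definition sub :: "'a cset \<Rightarrow> (nat \<Rightarrow> 'a set) \<Rightarrow> 'a cset" where
  "sub X S = X\<lparr>carrier := S\<rparr>"

text \<open>The representable I^n on [n]: I^n(m) = hom n m.\<close>
definition cube :: "nat \<Rightarrow> (nat \<Rightarrow> pt) cset" where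
  "cube n = \<lparr>carrier = (\<lambda>m. hom n m), act = (\<lambda>m p g h. bcomp g h)\<rparr>"

text \<open>Yoneda image of g \<in> hom n m: the map I^m -> I^n.\<close>
definition ymap :: "nat \<Rightarrow> (nat \<Rightarrow> pt) \<Rightarrow> (nat \<Rightarrow> (nat \<Rightarrow> pt) \<Rightarrow> (nat \<Rightarrow> pt))" where
  "ymap m g = (\<lambda>p h. if h \<in> hom m p then bcomp h g else undefined)"

text \<open>The face alpha_i^d : I^(n-1) -> I^n (1 <= i <= n) is the Yoneda image of the
  B-morphism [n] -> [n-1] sending x_i to d (d = False: bot, i.e. endpoint 0;
  d = True: top, endpoint 1) and the other variables in order to x_1..x_(n-1).\<close>
definition face :: "nat \<Rightarrow> nat \<Rightarrow> bool \<Rightarrow> (nat \<Rightarrow> pt)" where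
  "face n i d = (\<lambda>j. if j < i - 1 then Var j
                     else if j = i - 1 then (if d then Top else Bot)
                     else if j < n then Var (j - 1) else Bot)"

definition obox_carrier :: "nat \<Rightarrow> bool \<Rightarrow> nat \<Rightarrow> (nat \<Rightarrow> pt) set" where
  "obox_carrier n e m = {h. \<exists>i d. 1 \<le> i \<and> i \<le> n \<and> (i, d) \<noteq> (1, e) \<and>
                              h \<in> ymap (n - 1) (face n i d) m ` hom (n - 1) m}"

definition obox :: "nat \<Rightarrow> bool \<Rightarrow> (nat \<Rightarrow> pt) cset" where
  "obox n e = sub (cube n) (obox_carrier n e)"

type_synonym 'a path = "nat \<Rightarrow> (nat \<Rightarrow> pt) \<times> (nat \<Rightarrow> pt) \<Rightarrow> 'a"

text \<open>Exponential A^I: (A^I)(n) = maps I^n x I -> A, acting by precomposition with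
  y(g) x 1.\<close>
definition expI :: "'a cset \<Rightarrow> 'a path cset" where
  "expI A = \<lparr>carrier = (\<lambda>n. {\<phi>. morphism (cprod (cube n) (cube 1)) A \<phi>}),
             act = (\<lambda>n m g \<phi>. mcomp (cprod (cube m) (cube 1)) \<phi>
                                 (mprod (cube m) (cube 1) (ymap m g) (mid (cube 1))))\<rparr>"

text \<open>r : A -> A^I induced by I -> 1: a \<in> A(n) goes to I^n x I -> I^n -> A.\<close>
definition constpath :: "'a cset \<Rightarrow> (nat \<Rightarrow> 'a \<Rightarrow> 'a path)" where
  "constpath A = (\<lambda>n a. if a \<in> carrier A n then
       (\<lambda>p ht. if ht \<in> hom n p \<times> hom 1 p then act A n p (fst ht) a else undefined)
     else undefined)"

definition boxdom :: "nat \<Rightarrow> nat \<Rightarrow> bool \<Rightarrow> ((nat \<Rightarrow> pt) \<times> (nat \<Rightarrow> pt)) cset" where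
  "boxdom k n e = cprod (cube k) (obox n e)"

definition cubedom :: "nat \<Rightarrow> nat \<Rightarrow> ((nat \<Rightarrow> pt) \<times> (nat \<Rightarrow> pt)) cset" where
  "cubedom k n = cprod (cube k) (cube n)"

text \<open>phi n e k a b' is the chosen filler.\<close>
definition ukf_structure :: "'x cset \<Rightarrow> 'y cset \<Rightarrow> (nat \<Rightarrow> 'y \<Rightarrow> 'x)
   \<Rightarrow> (nat \<Rightarrow> bool \<Rightarrow> nat \<Rightarrow> (nat \<Rightarrow> (nat \<Rightarrow> pt) \<times> (nat \<Rightarrow> pt) \<Rightarrow> 'x)
        \<Rightarrow> (nat \<Rightarrow> (nat \<Rightarrow> pt) \<times> (nat \<Rightarrow> pt) \<Rightarrow> 'y)
        \<Rightarrow> (nat \<Rightarrow> (nat \<Rightarrow> pt) \<times> (nat \<Rightarrow> pt) \<Rightarrow> 'y)) \<Rightarrow> bool" where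
  "ukf_structure X Y f \<phi> \<longleftrightarrow>
    (\<forall>n e k a b'. 1 \<le> n \<longrightarrow> 1 \<le> k \<longrightarrow>
       morphism (cubedom k n) X a \<longrightarrow> morphism (boxdom k n e) Y b' \<longrightarrow>
       mcomp (boxdom k n e) f b' = mcomp (boxdom k n e) a (mid (boxdom k n e)) \<longrightarrow>
         morphism (cubedom k n) Y (\<phi> n e k a b') \<and>
         mcomp (boxdom k n e) (\<phi> n e k a b') (mid (boxdom k n e)) = b' \<and>
         mcomp (cubedom k n) f (\<phi> n e k a b') = a \<and>
         (\<forall>j \<alpha>. 1 \<le> j \<longrightarrow> morphism (cube j) (cube k) \<alpha> \<longrightarrow>
            mcomp (cubedom j n) (\<phi> n e k a b') (mprod (cube j) (cube n) \<alpha> (mid (cube n)))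
            = \<phi> n e j (mcomp (cubedom j n) a (mprod (cube j) (cube n) \<alpha> (mid (cube n))))
                       (mcomp (boxdom j n e) b' (mprod (cube j) (obox n e) \<alpha> (mid (obox n e))))))"

definition uniform_kan_fibration :: "'x cset \<Rightarrow> 'y cset \<Rightarrow> (nat \<Rightarrow> 'y \<Rightarrow> 'x) \<Rightarrow> bool" where
  "uniform_kan_fibration X Y f \<longleftrightarrow> morphism Y X f \<and> (\<exists>\<phi>. ukf_structure X Y f \<phi>)"

definition uniform_kan_complex :: "'a cset \<Rightarrow> bool" where
  "uniform_kan_complex A \<longleftrightarrow> uniform_kan_fibration terminal A (to_terminal A)"

end

theory Submission
  imports Defs
begin


lemma bcomp_assoc: "bcomp h (bcomp g f) = bcomp (bcomp h g) f"
  unfolding bcomp_def by (rule ext) (case_tac "f x"; simp)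

lemma ext_pts: "x \<in> pts b \<Longrightarrow> g \<in> hom b c \<Longrightarrow> ext g x \<in> pts c"
  unfolding pts_def hom_def by (cases x) (auto simp: pts_def)

lemma bcomp_hom: "f \<in> hom a b \<Longrightarrow> g \<in> hom b c \<Longrightarrow> bcomp g f \<in> hom a c"
  unfolding bcomp_def by (auto simp: hom_def intro!: ext_pts[unfolded hom_def])

lemma bcomp_bid_r: "g \<in> hom n m \<Longrightarrow> bcomp g (bid n) = g"
  unfolding bcomp_def bid_def hom_def by (rule ext) auto

lemma bcomp_bid_l: "g \<in> hom n m \<Longrightarrow> bcomp (bid m) g = g"
  unfolding bcomp_def bid_def hom_def pts_def
  apply (rule ext)
  subgoal for i by (cases "i < n"; cases "g i") auto
  done

lemma bid_hom: "n \<le> m \<Longrightarrow> bid n \<in> hom n m" "bid n \<in> hom (Suc n) n"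
  unfolding bid_def hom_def pts_def by auto

definition c0 :: "nat \<Rightarrow> pt" where "c0 = (\<lambda>i. Bot)"
definition c1 :: "nat \<Rightarrow> pt" where "c1 = (\<lambda>i. if i = 0 then Top else Bot)"
definition pair2 :: "(nat \<Rightarrow> pt) \<Rightarrow> (nat \<Rightarrow> pt) \<Rightarrow> (nat \<Rightarrow> pt)" where
  "pair2 t s = (\<lambda>i. if i = 0 then t 0 else if i = Suc 0 then s 0 else Bot)"

lemma c0_hom[simp]: "c0 \<in> hom n m" and c1_hom[simp]: "c1 \<in> hom 1 m"
  unfolding c0_def c1_def hom_def pts_def by auto

lemma c1_hom'[simp]: "c1 \<in> hom (Suc 0) m" using c1_hom by simp

lemma bcomp_c0[simp]: "bcomp g c0 = c0" and bcomp_c1[simp]: "bcomp g c1 = c1"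
  unfolding c0_def c1_def bcomp_def by auto

lemma pair2_hom: "t \<in> hom 1 m \<Longrightarrow> s \<in> hom 1 m \<Longrightarrow> pair2 t s \<in> hom 2 m"
  unfolding pair2_def hom_def by auto

lemma bcomp_pair2: "bcomp g (pair2 t s) = pair2 (bcomp g t) (bcomp g s)"
  unfolding pair2_def bcomp_def by auto

definition tpart :: "(nat \<Rightarrow> pt) \<Rightarrow> (nat \<Rightarrow> pt)" where
  "tpart h = (\<lambda>i. if i = 0 then h 0 else Bot)"

lemma hom1_eq: "t \<in> hom 1 m \<Longrightarrow> tpart t = t"
  unfolding hom_def tpart_def by auto

lemma tpart_hom: "h 0 \<in> pts m \<Longrightarrow> tpart h \<in> hom 1 m"
  unfolding hom_def tpart_def by auto

lemma tpart_hom2: "h \<in> hom 2 m \<Longrightarrow> tpart h \<in> hom 1 m"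
  unfolding hom_def tpart_def by auto

lemma bcomp_tpart: "bcomp f (tpart h) = tpart (bcomp f h)"
  unfolding bcomp_def tpart_def by auto

lemma tpart_pair2: "t \<in> hom 1 m \<Longrightarrow> tpart (pair2 t s) = t"
  unfolding hom_def tpart_def pair2_def by auto

lemma tpart_c0: "h 0 = Bot \<Longrightarrow> tpart h = c0"
  unfolding tpart_def c0_def by auto

lemma obox1: "obox_carrier 1 True m = {c0}"
proof -
  have f: "face 1 1 False = c0" unfolding face_def c0_def by auto
  have "ymap 0 c0 m h = c0" if "h \<in> hom 0 m" for h using that
    unfolding ymap_def by simp
  moreover have "c0 \<in> hom 0 m" by simp
  ultimately show ?thesis unfolding obox_carrier_def f
  proof (intro set_eqI iffI)
    fix h assume "h \<in> {h. \<exists>i d. 1 \<le> i \<and> i \<le> 1 \<and> (i, d) \<noteq> (1, True) \<and> h \<in> ymap (1 - 1) (face 1 i d) m ` hom (1 - 1) m}"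
    then obtain i d h' where "i = 1" "d = False" "h' \<in> hom 0 m" "h = ymap 0 (face 1 i d) m h'" by auto
    then show "h \<in> {c0}" using \<open>\<And>h. h \<in> hom 0 m \<Longrightarrow> ymap 0 c0 m h = c0\<close> f by simp
  next
    fix h assume "h \<in> {c0}"
    then show "h \<in> {h. \<exists>i d. 1 \<le> i \<and> i \<le> 1 \<and> (i, d) \<noteq> (1, True) \<and> h \<in> ymap (1 - 1) (face 1 i d) m ` hom (1 - 1) m}"
      using \<open>\<And>h. h \<in> hom 0 m \<Longrightarrow> ymap 0 c0 m h = c0\<close> f \<open>c0 \<in> hom 0 m\<close>
      by (intro CollectI exI[of _ 1] exI[of _ False]) (auto simp: f intro!: image_eqI[of _ _ c0])
  qed
qed

lemma obox1s[simp]: "obox_carrier (Suc 0) True m = {c0}" using obox1 by simp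

lemma obox2: "h \<in> obox_carrier 2 True m \<longleftrightarrow> h \<in> hom 2 m \<and> (h 0 = Bot \<or> h 1 = Bot \<or> h 1 = Top)"
proof
  assume "h \<in> obox_carrier 2 True m"
  then obtain i d h' where i: "1 \<le> i" "i \<le> 2" "(i,d) \<noteq> (1,True)" and h': "h' \<in> hom 1 m"
    and h: "h = ymap 1 (face 2 i d) m h'"
    unfolding obox_carrier_def by auto
  have "i = 1 \<or> i = 2" using i by auto
  then show "h \<in> hom 2 m \<and> (h 0 = Bot \<or> h 1 = Bot \<or> h 1 = Top)"
    using i h' unfolding h ymap_def face_def bcomp_def hom_def pts_def
    by (cases d; auto)
next
  assume a: "h \<in> hom 2 m \<and> (h 0 = Bot \<or> h 1 = Bot \<or> h 1 = Top)"
  define h1 where "h1 = (\<lambda>i::nat. if i = 0 then h 1 else Bot)"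
  define h0 where "h0 = (\<lambda>i::nat. if i = 0 then h 0 else Bot)"
  have hs: "h1 \<in> hom 1 m" "h0 \<in> hom 1 m" using a unfolding h1_def h0_def hom_def by auto
  have hi: "h i = Bot" if "i \<ge> 2" for i using a that unfolding hom_def by auto
  show "h \<in> obox_carrier 2 True m"
  proof (cases "h 0 = Bot")
    case True
    have "h = ymap 1 (face 2 1 False) m h1"
      using hs True hi unfolding ymap_def face_def bcomp_def h1_def
      by (auto intro!: ext simp: numeral_2_eq_2 less_Suc_eq)
    then show ?thesis unfolding obox_carrier_def using hs
      by (intro CollectI exI[of _ 1] exI[of _ False]) auto
  next
    case False
    then have "h 1 = Bot \<or> h 1 = Top" using a by auto
    then obtain d where d: "h 1 = (if d then Top else Bot)" by metis
    have "h = ymap 1 (face 2 2 d) m h0"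
      using hs d hi unfolding ymap_def face_def bcomp_def h0_def
      by (auto intro!: ext simp: numeral_2_eq_2 less_Suc_eq)
    then show ?thesis unfolding obox_carrier_def using hs
      by (intro CollectI exI[of _ 2] exI[of _ d]) auto
  qed
qed



lemma carrier_cube[simp]: "carrier (cube n) m = hom n m" and act_cube[simp]: "act (cube n) m p g h = bcomp g h"
  by (simp_all add: cube_def)
lemma carrier_cubedom[simp]: "carrier (cubedom k n) m = hom k m \<times> hom n m"
  and act_cubedom[simp]: "act (cubedom k n) m p g x = (bcomp g (fst x), bcomp g (snd x))"
  by (simp_all add: cubedom_def cprod_def cube_def)
lemma carrier_boxdom[simp]: "carrier (boxdom k n e) m = hom k m \<times> obox_carrier n e m"
  and act_boxdom[simp]: "act (boxdom k n e) m p g x = (bcomp g (fst x), bcomp g (snd x))"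
  by (simp_all add: boxdom_def cprod_def cube_def obox_def sub_def)
lemma carrier_obox[simp]: "carrier (obox n e) m = obox_carrier n e m"
  and act_obox[simp]: "act (obox n e) m p g h = bcomp g h"
  by (simp_all add: obox_def sub_def cube_def)
lemma carrier_cprod[simp]: "carrier (cprod X Y) m = carrier X m \<times> carrier Y m"
  and act_cprod[simp]: "act (cprod X Y) m p g x = (act X m p g (fst x), act Y m p g (snd x))"
  by (simp_all add: cprod_def)
lemma carrier_expI[simp]: "carrier (expI A) n = {\<phi>. morphism (cprod (cube n) (cube 1)) A \<phi>}"
  by (simp add: expI_def)
lemma act_expI: "act (expI A) n m g \<phi> = (\<lambda>p yt. if yt \<in> hom m p \<times> hom 1 p then \<phi> p (ymap m g p (fst yt), snd yt) else undefined)"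
  by (auto simp: expI_def mcomp_def mprod_def mid_def intro!: ext)

lemma ymap_morph: "g \<in> hom k m \<Longrightarrow> morphism (cube m) (cube k) (ymap m g)"
  unfolding morphism_def ymap_def by (auto simp: bcomp_hom bcomp_assoc)

lemma obox2_closed: "h \<in> obox_carrier 2 True m \<Longrightarrow> g \<in> hom m p \<Longrightarrow> bcomp g h \<in> obox_carrier 2 True p"
  unfolding obox2 using bcomp_hom by (auto simp: bcomp_def)

lemma morph_eqI: "(\<And>m x. x \<in> carrier X m \<Longrightarrow> f m x = g m x) \<Longrightarrow> (\<And>m x. x \<notin> carrier X m \<Longrightarrow> f m x = undefined)
  \<Longrightarrow> (\<And>m x. x \<notin> carrier X m \<Longrightarrow> g m x = undefined) \<Longrightarrow> f = g"
  by (intro ext) metis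

lemma morph_car: "morphism X Y h \<Longrightarrow> x \<in> carrier X m \<Longrightarrow> h m x \<in> carrier Y m"
  unfolding morphism_def by blast
lemma morph_nat: "morphism X Y h \<Longrightarrow> f \<in> hom m n \<Longrightarrow> x \<in> carrier X m \<Longrightarrow> h n (act X m n f x) = act Y m n f (h m x)"
  unfolding morphism_def by blast
lemma morph_undef: "morphism X Y h \<Longrightarrow> x \<notin> carrier X m \<Longrightarrow> h m x = undefined"
  unfolding morphism_def by blast

lemma ukfD:
  assumes "ukf_structure X Y f \<phi>" "1 \<le> n" "1 \<le> k" "morphism (cubedom k n) X a" "morphism (boxdom k n e) Y b'"
    "mcomp (boxdom k n e) f b' = mcomp (boxdom k n e) a (mid (boxdom k n e))"
  shows "morphism (cubedom k n) Y (\<phi> n e k a b')"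
    "\<And>m x. x \<in> carrier (boxdom k n e) m \<Longrightarrow> \<phi> n e k a b' m x = b' m x"
    "\<And>m x. x \<in> carrier (cubedom k n) m \<Longrightarrow> f m (\<phi> n e k a b' m x) = a m x"
    "\<And>j \<alpha>. 1 \<le> j \<Longrightarrow> morphism (cube j) (cube k) \<alpha> \<Longrightarrow>
            mcomp (cubedom j n) (\<phi> n e k a b') (mprod (cube j) (cube n) \<alpha> (mid (cube n)))
            = \<phi> n e j (mcomp (cubedom j n) a (mprod (cube j) (cube n) \<alpha> (mid (cube n))))
                       (mcomp (boxdom j n e) b' (mprod (cube j) (obox n e) \<alpha> (mid (obox n e))))"
proof -
  note c = assms(1)[unfolded ukf_structure_def, rule_format, OF assms(2-6)]
  show "morphism (cubedom k n) Y (\<phi> n e k a b')" using c by blast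
  show "\<phi> n e k a b' m x = b' m x" if "x \<in> carrier (boxdom k n e) m" for m x
  proof -
    have "mcomp (boxdom k n e) (\<phi> n e k a b') (mid (boxdom k n e)) m x = b' m x" using c by simp
    then show ?thesis using that by (simp add: mcomp_def mid_def)
  qed
  show "f m (\<phi> n e k a b' m x) = a m x" if "x \<in> carrier (cubedom k n) m" for m x
  proof -
    have "mcomp (cubedom k n) f (\<phi> n e k a b') m x = a m x" using c by simp
    then show ?thesis using that by (simp add: mcomp_def)
  qed
  show "\<And>j \<alpha>. 1 \<le> j \<Longrightarrow> morphism (cube j) (cube k) \<alpha> \<Longrightarrow>
            mcomp (cubedom j n) (\<phi> n e k a b') (mprod (cube j) (cube n) \<alpha> (mid (cube n)))
            = \<phi> n e j (mcomp (cubedom j n) a (mprod (cube j) (cube n) \<alpha> (mid (cube n))))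
                       (mcomp (boxdom j n e) b' (mprod (cube j) (obox n e) \<alpha> (mid (obox n e))))"
    using c by blast
qed

lemma mcomp_mprod_eval: "mcomp (cprod (cube j) Z) h (mprod (cube j) Z \<alpha> (mid Z)) m x =
   (if x \<in> hom j m \<times> carrier Z m then h m (\<alpha> m (fst x), snd x) else undefined)"
  by (auto simp: mcomp_def mprod_def mid_def mem_Times_iff)

lemma cubedom_cprod: "cubedom k n = cprod (cube k) (cube n)" by (simp add: cubedom_def)
lemma boxdom_cprod: "boxdom k n e = cprod (cube k) (obox n e)" by (simp add: boxdom_def)

lemma ymap_eval: "h \<in> hom m p \<Longrightarrow> ymap m g p h = bcomp h g" by (simp add: ymap_def)

lemma act_expI_eval: "yt \<in> hom m p \<times> hom 1 p \<Longrightarrow> act (expI A) n m g \<phi> p yt = \<phi> p (bcomp (fst yt) g, snd yt)"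
  by (auto simp: act_expI ymap_def mem_Times_iff)

lemma act_expI_car:
  assumes g: "g \<in> hom k m" and d: "\<delta> \<in> carrier (expI A) k"
  shows "act (expI A) k m g \<delta> \<in> carrier (expI A) m"
proof -
  have dm: "morphism (cprod (cube k) (cube 1)) A \<delta>" using d by simp
  show ?thesis unfolding carrier_expI mem_Collect_eq morphism_def
  proof (intro conjI allI impI)
    fix p x assume "x \<in> carrier (cprod (cube m) (cube 1)) p"
    then show "act (expI A) k m g \<delta> p x \<in> carrier A p"
      using morph_car[OF dm] g bcomp_hom by (auto simp: act_expI_eval)
  next
    fix p q f x assume f: "f \<in> hom p q" and x: "x \<in> carrier (cprod (cube m) (cube 1)) p"
    have "\<delta> q (bcomp (bcomp f (fst x)) g, bcomp f (snd x)) = act A p q f (\<delta> p (bcomp (fst x) g, snd x))"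
      using morph_nat[OF dm f, of "(bcomp (fst x) g, snd x)"] x g bcomp_hom
      by (auto simp: bcomp_assoc)
    then show "act (expI A) k m g \<delta> q (act (cprod (cube m) (cube 1)) p q f x) =
         act A p q f (act (expI A) k m g \<delta> p x)"
      using x f g bcomp_hom by (auto simp: act_expI_eval)
  next
    fix p x assume "x \<notin> carrier (cprod (cube m) (cube 1)) p"
    then show "act (expI A) k m g \<delta> p x = undefined" by (auto simp: act_expI)
  qed
qed



locale P36 =
  fixes A :: "'a cset" and B :: "'b cset"
    and \<pi> :: "nat \<Rightarrow> 'b \<Rightarrow> 'a path" and b :: "nat \<Rightarrow> 'a \<Rightarrow> 'b"
    and PA and PB
  assumes SA: "ukf_structure terminal A (to_terminal A) PA"
    and SB: "ukf_structure (expI A) B \<pi> PB"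
    and mpi: "morphism B (expI A) \<pi>"
    and mb: "morphism A B b"
    and cst: "mcomp A \<pi> b = constpath A"
begin

definition aA :: "nat \<Rightarrow> nat \<Rightarrow> (nat \<Rightarrow> pt) \<times> (nat \<Rightarrow> pt) \<Rightarrow> unit" where
  "aA k = to_terminal (cubedom k 2)"

definition bA :: "nat \<Rightarrow> 'a path \<Rightarrow> 'a path" where
  "bA k \<gamma> = (\<lambda>m xh. if xh \<in> hom k m \<times> obox_carrier 2 True m then
      (if snd xh 1 = Top then \<gamma> m (fst xh, tpart (snd xh)) else \<gamma> m (fst xh, c0))
     else undefined)"

definition F where "F k \<gamma> = PA 2 True k (aA k) (bA k \<gamma>)"

lemma aA_morph: "morphism (cubedom k 2) terminal (aA k)"
  unfolding morphism_def aA_def to_terminal_def terminal_def by auto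

lemma bA_morph:
  assumes g: "\<gamma> \<in> carrier (expI A) k"
  shows "morphism (boxdom k 2 True) A (bA k \<gamma>)"
proof -
  have gm: "morphism (cprod (cube k) (cube 1)) A \<gamma>" using g by simp
  have inA: "\<gamma> m (x, t) \<in> carrier A m" if "x \<in> hom k m" "t \<in> hom 1 m" for m x t
    using gm that unfolding morphism_def by auto
  have nat: "\<gamma> n (bcomp f x, bcomp f t) = act A m n f (\<gamma> m (x, t))"
    if "f \<in> hom m n" "x \<in> hom k m" "t \<in> hom 1 m" for m n f x t
    using gm that unfolding morphism_def by (metis act_cube act_cprod carrier_cube carrier_cprod fst_conv snd_conv mem_Sigma_iff)
  note t0 = tpart_hom2
  show ?thesis unfolding morphism_def
  proof (intro conjI allI impI)
    fix m xh assume "xh \<in> carrier (boxdom k 2 True) m"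
    then show "bA k \<gamma> m xh \<in> carrier A m" unfolding bA_def using inA t0 by (auto simp: obox2)
  next
    fix m n f xh assume f: "f \<in> hom m n" and xh: "xh \<in> carrier (boxdom k 2 True) m"
    obtain x h where xh': "xh = (x, h)" by force
    have x: "x \<in> hom k m" and h: "h \<in> obox_carrier 2 True m" using xh xh' by auto
    have h2: "h \<in> hom 2 m" and hc: "h 0 = Bot \<or> h 1 = Bot \<or> h 1 = Top" using h obox2 by auto
    have fx: "bcomp f x \<in> hom k n" and fh: "bcomp f h \<in> obox_carrier 2 True n"
      using bcomp_hom obox2_closed x h f by auto
    have e1: "bcomp f h 1 = ext f (h 1)" "bcomp f h 0 = ext f (h 0)" by (simp_all add: bcomp_def)
    note eq = bcomp_tpart
    have act: "act (boxdom k 2 True) m n f xh = (bcomp f x, bcomp f h)" by (simp add: xh')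
    show "bA k \<gamma> n (act (boxdom k 2 True) m n f xh) = act A m n f (bA k \<gamma> m xh)"
    proof (cases "h 1 = Top")
      case True
      have "act A m n f (\<gamma> m (x, tpart h)) = \<gamma> n (bcomp f x, tpart (bcomp f h))"
        using nat[OF f x t0[OF h2]] eq by simp
      then show ?thesis using True fx fh x h f e1 unfolding act bA_def xh'
        by simp
    next
      case False
      show ?thesis
      proof (cases "bcomp f h 1 = Top")
        case True
        then have "h 0 = Bot" using False hc e1 by (cases "h 1") auto
        then have "tpart (bcomp f h) = c0" using e1 by (auto intro: tpart_c0)
        then show ?thesis using True False fx fh x h f nat[OF f x c0_hom] unfolding act bA_def xh'
          by simp
      next
        case False2: False
        then show ?thesis using False fx fh x h f nat[OF f x c0_hom] unfolding act bA_def xh'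
          by simp
      qed
    qed
  next
    fix m xh assume "xh \<notin> carrier (boxdom k 2 True) m"
    then show "bA k \<gamma> m xh = undefined" unfolding bA_def by auto
  qed
qed


end


context P36 begin

lemma gmorph: "\<gamma> \<in> carrier (expI A) k \<Longrightarrow> morphism (cprod (cube k) (cube 1)) A \<gamma>" by simp

lemma bA_compat:
  assumes g: "\<gamma> \<in> carrier (expI A) k"
  shows "mcomp (boxdom k 2 True) (to_terminal A) (bA k \<gamma>) =
      mcomp (boxdom k 2 True) (aA k) (mid (boxdom k 2 True))"
proof (intro ext)
  fix m x
  show "mcomp (boxdom k 2 True) (to_terminal A) (bA k \<gamma>) m x =
      mcomp (boxdom k 2 True) (aA k) (mid (boxdom k 2 True)) m x"
  proof (cases "x \<in> carrier (boxdom k 2 True) m")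
    case True
    then have "bA k \<gamma> m x \<in> carrier A m" using morph_car[OF bA_morph[OF g]] by blast
    moreover have "x \<in> carrier (cubedom k 2) m" using True obox2 by auto
    ultimately show ?thesis using True by (simp add: mcomp_def to_terminal_def aA_def mid_def)
  next
    case False
    then show ?thesis by (simp add: mcomp_def)
  qed
qed

lemma F_facts:
  assumes g: "\<gamma> \<in> carrier (expI A) k" and k: "1 \<le> k"
  shows "morphism (cubedom k 2) A (F k \<gamma>)"
    "\<And>m x. x \<in> hom k m \<times> obox_carrier 2 True m \<Longrightarrow> F k \<gamma> m x = bA k \<gamma> m x"
    "\<And>j \<alpha>. 1 \<le> j \<Longrightarrow> morphism (cube j) (cube k) \<alpha> \<Longrightarrow>
            mcomp (cubedom j 2) (F k \<gamma>) (mprod (cube j) (cube 2) \<alpha> (mid (cube 2)))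
            = PA 2 True j (mcomp (cubedom j 2) (aA k) (mprod (cube j) (cube 2) \<alpha> (mid (cube 2))))
                       (mcomp (boxdom j 2 True) (bA k \<gamma>) (mprod (cube j) (obox 2 True) \<alpha> (mid (obox 2 True))))"
  using ukfD[OF SA _ k aA_morph bA_morph[OF g] bA_compat[OF g]] unfolding F_def by auto

lemma aA_unif:
  assumes g: "g \<in> hom k m"
  shows "mcomp (cubedom m 2) (aA k) (mprod (cube m) (cube 2) (ymap m g) (mid (cube 2))) = aA m"
  unfolding cubedom_cprod
  by (intro ext) (auto simp: mcomp_mprod_eval aA_def to_terminal_def ymap_eval bcomp_hom[OF _ g])

lemma bA_unif:
  assumes g: "g \<in> hom k m"
  shows "mcomp (boxdom m 2 True) (bA k \<gamma>) (mprod (cube m) (obox 2 True) (ymap m g) (mid (obox 2 True)))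
     = bA m (act (expI A) k m g \<gamma>)"
proof (intro ext)
  fix p x
  show "mcomp (boxdom m 2 True) (bA k \<gamma>) (mprod (cube m) (obox 2 True) (ymap m g) (mid (obox 2 True))) p x
     = bA m (act (expI A) k m g \<gamma>) p x"
  proof (cases "x \<in> hom m p \<times> obox_carrier 2 True p")
    case True
    obtain y h where x: "x = (y, h)" by force
    have y: "y \<in> hom m p" and h: "h \<in> obox_carrier 2 True p" using True x by auto
    have "tpart h \<in> hom 1 p" "bcomp y g \<in> hom k p"
      using tpart_hom2 obox2 bcomp_hom g h y by auto
    then show ?thesis using y h unfolding boxdom_cprod x
      by (simp add: mcomp_mprod_eval ymap_eval bA_def act_expI_eval)
  next
    case False
    then show ?thesis unfolding boxdom_cprod by (simp add: mcomp_mprod_eval bA_def)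
  qed
qed

lemma F_unif:
  assumes g: "\<gamma> \<in> carrier (expI A) k" and k: "1 \<le> k" and m: "1 \<le> m" and gh: "g \<in> hom k m"
  shows "F m (act (expI A) k m g \<gamma>) = mcomp (cubedom m 2) (F k \<gamma>) (mprod (cube m) (cube 2) (ymap m g) (mid (cube 2)))"
  using F_facts(3)[OF g k m ymap_morph[OF gh]] aA_unif[OF gh] bA_unif[OF gh] unfolding F_def by simp

lemma F_unif_eval:
  assumes g: "\<gamma> \<in> carrier (expI A) k" and k: "1 \<le> k" and m: "1 \<le> m" and gh: "g \<in> hom k m"
    and w: "w \<in> hom m q" and h: "h \<in> hom 2 q"
  shows "F m (act (expI A) k m g \<gamma>) q (w, h) = F k \<gamma> q (bcomp w g, h)"
  using F_unif[OF assms(1-4)] w h unfolding cubedom_cprod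
  by (simp add: mcomp_mprod_eval ymap_eval)

end


context P36 begin

definition aP :: "nat \<Rightarrow> 'a path \<Rightarrow> nat \<Rightarrow> (nat \<Rightarrow> pt) \<times> (nat \<Rightarrow> pt) \<Rightarrow> 'a path" where
  "aP k \<gamma> = (\<lambda>m xs. if xs \<in> hom k m \<times> hom 1 m then
     (\<lambda>p yt. if yt \<in> hom m p \<times> hom 1 p then
        F k \<gamma> p (bcomp (fst yt) (fst xs), pair2 (snd yt) (bcomp (fst yt) (snd xs))) else undefined)
     else undefined)"

definition bP :: "nat \<Rightarrow> 'a path \<Rightarrow> nat \<Rightarrow> (nat \<Rightarrow> pt) \<times> (nat \<Rightarrow> pt) \<Rightarrow> 'b" where
  "bP k \<gamma> = (\<lambda>m xh. if xh \<in> hom k m \<times> obox_carrier 1 True m then b m (\<gamma> m (fst xh, c0)) else undefined)"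

lemma aP_eval: "x \<in> hom k m \<Longrightarrow> s \<in> hom 1 m \<Longrightarrow> aP k \<gamma> m (x, s) =
     (\<lambda>p yt. if yt \<in> hom m p \<times> hom 1 p then
        F k \<gamma> p (bcomp (fst yt) x, pair2 (snd yt) (bcomp (fst yt) s)) else undefined)"
  by (simp add: aP_def cong: if_cong)

lemma aP_car:
  assumes g: "\<gamma> \<in> carrier (expI A) k" and k: "1 \<le> k" and x: "x \<in> hom k m" and s: "s \<in> hom 1 m"
  shows "aP k \<gamma> m (x, s) \<in> carrier (expI A) m"
proof -
  note FM = F_facts(1)[OF g k]
  show ?thesis unfolding carrier_expI mem_Collect_eq morphism_def aP_eval[OF x s]
  proof (intro conjI allI impI)
    fix p yt assume "yt \<in> carrier (cprod (cube m) (cube 1)) p"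
    then show "(if yt \<in> hom m p \<times> hom 1 p then F k \<gamma> p (bcomp (fst yt) x, pair2 (snd yt) (bcomp (fst yt) s)) else undefined) \<in> carrier A p"
      using morph_car[OF FM] x s bcomp_hom pair2_hom by auto
  next
    fix p q f yt assume f: "f \<in> hom p q" and yt: "yt \<in> carrier (cprod (cube m) (cube 1)) p"
    obtain y t where yt': "yt = (y, t)" by force
    have y: "y \<in> hom m p" and t: "t \<in> hom 1 p" using yt yt' by auto
    have c: "(bcomp y x, pair2 t (bcomp y s)) \<in> carrier (cubedom k 2) p"
      using bcomp_hom pair2_hom x y s t by auto
    have "F k \<gamma> q (bcomp f (bcomp y x), bcomp f (pair2 t (bcomp y s))) = act A p q f (F k \<gamma> p (bcomp y x, pair2 t (bcomp y s)))"
      using morph_nat[OF FM f c] by simp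
    then show "(if act (cprod (cube m) (cube 1)) p q f yt \<in> hom m q \<times> hom 1 q
         then F k \<gamma> q (bcomp (fst (act (cprod (cube m) (cube 1)) p q f yt)) x,
                  pair2 (snd (act (cprod (cube m) (cube 1)) p q f yt))
                   (bcomp (fst (act (cprod (cube m) (cube 1)) p q f yt)) s))
         else undefined) =
        act A p q f (if yt \<in> hom m p \<times> hom 1 p then F k \<gamma> p (bcomp (fst yt) x, pair2 (snd yt) (bcomp (fst yt) s)) else undefined)"
      using y t f bcomp_hom unfolding yt' by (simp add: bcomp_pair2 bcomp_assoc)
  next
    fix p yt assume "yt \<notin> carrier (cprod (cube m) (cube 1)) p"
    then show "(if yt \<in> hom m p \<times> hom 1 p then F k \<gamma> p (bcomp (fst yt) x, pair2 (snd yt) (bcomp (fst yt) s)) else undefined) = undefined"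
      by simp
  qed
qed

lemma aP_morph:
  assumes g: "\<gamma> \<in> carrier (expI A) k" and k: "1 \<le> k"
  shows "morphism (cubedom k 1) (expI A) (aP k \<gamma>)"
  unfolding morphism_def
proof (intro conjI allI impI)
  fix m xs assume "xs \<in> carrier (cubedom k 1) m"
  then show "aP k \<gamma> m xs \<in> carrier (expI A) m" using aP_car[OF g k] by (cases xs) auto
next
  fix m n f xs assume f: "f \<in> hom m n" and xs: "xs \<in> carrier (cubedom k 1) m"
  obtain x s where xs': "xs = (x, s)" by force
  have x: "x \<in> hom k m" and s: "s \<in> hom 1 m" using xs xs' by auto
  have fx: "bcomp f x \<in> hom k n" and fs: "bcomp f s \<in> hom 1 n" using bcomp_hom f x s by auto
  show "aP k \<gamma> n (act (cubedom k 1) m n f xs) = act (expI A) m n f (aP k \<gamma> m xs)"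
  proof (intro ext)
    fix p yt
    show "aP k \<gamma> n (act (cubedom k 1) m n f xs) p yt = act (expI A) m n f (aP k \<gamma> m xs) p yt"
    proof (cases "yt \<in> hom n p \<times> hom 1 p")
      case True
      obtain y t where yt': "yt = (y, t)" by force
      have y: "y \<in> hom n p" and t: "t \<in> hom 1 p" using True yt' by auto
      have yf: "bcomp y f \<in> hom m p" using bcomp_hom f y by auto
      show ?thesis using y t yf unfolding xs' yt'
        by (simp add: aP_eval[OF fx fs] aP_eval[OF x s] act_expI_eval bcomp_assoc)
    next
      case False
      then show ?thesis unfolding xs' by (simp add: aP_eval[OF fx fs] act_expI)
    qed
  qed
next
  fix m xs assume "xs \<notin> carrier (cubedom k 1) m"
  then show "aP k \<gamma> m xs = undefined" by (simp add: aP_def)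
qed

lemma bP_morph:
  assumes g: "\<gamma> \<in> carrier (expI A) k"
  shows "morphism (boxdom k 1 True) B (bP k \<gamma>)"
  unfolding morphism_def
proof (intro conjI allI impI)
  note gm = gmorph[OF g]
  fix m xh assume "xh \<in> carrier (boxdom k 1 True) m"
  then show "bP k \<gamma> m xh \<in> carrier B m"
    using morph_car[OF mb] morph_car[OF gm] by (auto simp: bP_def)
next
  note gm = gmorph[OF g]
  fix m n f xh assume f: "f \<in> hom m n" and xh: "xh \<in> carrier (boxdom k 1 True) m"
  obtain x h where xh': "xh = (x, h)" by force
  have x: "x \<in> hom k m" and h: "h = c0" using xh xh' obox1 by auto
  have fx: "bcomp f x \<in> hom k n" using bcomp_hom f x by auto
  have c: "\<gamma> m (x, c0) \<in> carrier A m" using morph_car[OF gm] x by auto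
  have "\<gamma> n (bcomp f x, c0) = act A m n f (\<gamma> m (x, c0))"
    using morph_nat[OF gm f, of "(x, c0)"] x by simp
  then show "bP k \<gamma> n (act (boxdom k 1 True) m n f xh) = act B m n f (bP k \<gamma> m xh)"
    using fx x morph_nat[OF mb f c] unfolding xh' h by (simp add: bP_def obox1)
next
  fix m xh assume "xh \<notin> carrier (boxdom k 1 True) m"
  then show "bP k \<gamma> m xh = undefined" by (simp add: bP_def)
qed

lemma cst_eval: "a \<in> carrier A m \<Longrightarrow> \<pi> m (b m a) = constpath A m a"
  using fun_cong[OF fun_cong[OF cst, of m], of a] by (simp add: mcomp_def)

lemma bP_compat:
  assumes g: "\<gamma> \<in> carrier (expI A) k" and k: "1 \<le> k"
  shows "mcomp (boxdom k 1 True) \<pi> (bP k \<gamma>) = mcomp (boxdom k 1 True) (aP k \<gamma>) (mid (boxdom k 1 True))"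
proof (rule ext, rule ext)
  note gm = gmorph[OF g]
  fix m xh
  show "mcomp (boxdom k 1 True) \<pi> (bP k \<gamma>) m xh = mcomp (boxdom k 1 True) (aP k \<gamma>) (mid (boxdom k 1 True)) m xh"
  proof (cases "xh \<in> carrier (boxdom k 1 True) m")
    case True
    obtain x h where xh': "xh = (x, h)" by force
    have x: "x \<in> hom k m" and h: "h = c0" using True xh' obox1 by auto
    have c: "\<gamma> m (x, c0) \<in> carrier A m" using morph_car[OF gm] x by auto
    have "constpath A m (\<gamma> m (x, c0)) = aP k \<gamma> m (x, c0)"
    proof (intro ext)
      fix p yt
      show "constpath A m (\<gamma> m (x, c0)) p yt = aP k \<gamma> m (x, c0) p yt"
      proof (cases "yt \<in> hom m p \<times> hom 1 p")
        case True
        obtain y t where yt': "yt = (y, t)" by force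
        have y: "y \<in> hom m p" and t: "t \<in> hom 1 p" using True yt' by auto
        have yx: "bcomp y x \<in> hom k p" using bcomp_hom x y by auto
        have p2: "pair2 t c0 \<in> obox_carrier 2 True p" using pair2_hom[OF t c0_hom] unfolding obox2
          by (simp add: pair2_def c0_def)
        have "pair2 t c0 1 \<noteq> Top" by (simp add: pair2_def c0_def)
        then have "F k \<gamma> p (bcomp y x, pair2 t c0) = \<gamma> p (bcomp y x, c0)"
          using F_facts(2)[OF g k, of "(bcomp y x, pair2 t c0)"] yx p2 by (simp add: bA_def)
        moreover have "\<gamma> p (bcomp y x, c0) = act A m p y (\<gamma> m (x, c0))"
          using morph_nat[OF gm y, of "(x, c0)"] x by simp
        ultimately show ?thesis using c y t unfolding yt' by (simp add: constpath_def aP_eval[OF x c0_hom])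
      next
        case False
        then show ?thesis using c by (simp add: constpath_def aP_eval[OF x c0_hom])
      qed
    qed
    then show ?thesis using True x c unfolding xh' h
      by (simp add: mcomp_def mid_def bP_def cst_eval obox1)
  next
    case False
    then show ?thesis by (simp add: mcomp_def)
  qed
qed

definition G where "G k \<gamma> = PB 1 True k (aP k \<gamma>) (bP k \<gamma>)"

lemma G_facts:
  assumes g: "\<gamma> \<in> carrier (expI A) k" and k: "1 \<le> k"
  shows "morphism (cubedom k 1) B (G k \<gamma>)"
    "\<And>m x. x \<in> hom k m \<times> hom 1 m \<Longrightarrow> \<pi> m (G k \<gamma> m x) = aP k \<gamma> m x"
    "\<And>j \<alpha>. 1 \<le> j \<Longrightarrow> morphism (cube j) (cube k) \<alpha> \<Longrightarrow>
            mcomp (cubedom j 1) (G k \<gamma>) (mprod (cube j) (cube 1) \<alpha> (mid (cube 1)))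
            = PB 1 True j (mcomp (cubedom j 1) (aP k \<gamma>) (mprod (cube j) (cube 1) \<alpha> (mid (cube 1))))
                       (mcomp (boxdom j 1 True) (bP k \<gamma>) (mprod (cube j) (obox 1 True) \<alpha> (mid (obox 1 True))))"
  using ukfD[OF SB _ k aP_morph[OF g k] bP_morph[OF g] bP_compat[OF g k]] unfolding G_def by auto

end


definition gext :: "nat \<Rightarrow> nat \<Rightarrow> (nat \<Rightarrow> pt) \<Rightarrow> (nat \<Rightarrow> pt)" where
  "gext n m g = (\<lambda>i. if i < n then g i else if i = n then Var m else Bot)"

lemma gext_hom: "g \<in> hom n m \<Longrightarrow> gext n m g \<in> hom (Suc n) (Suc m)"
  unfolding gext_def hom_def pts_def by (auto; fastforce)

lemma gext_bid_r: "g \<in> hom n m \<Longrightarrow> bcomp (gext n m g) (bid n) = g"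
  unfolding gext_def bid_def bcomp_def hom_def by (rule ext) auto

lemma gext_bid_l: "g \<in> hom n m \<Longrightarrow> bcomp (bid m) (gext n m g) = g"
  unfolding gext_def bid_def bcomp_def hom_def pts_def
  apply (rule ext)
  subgoal for i by (cases "i < n"; cases "g i") auto
  done

context P36 begin

lemma aP_unif:
  assumes g: "\<gamma> \<in> carrier (expI A) k" and k: "1 \<le> k" and m: "1 \<le> m" and gh: "g \<in> hom k m"
  shows "mcomp (cubedom m 1) (aP k \<gamma>) (mprod (cube m) (cube 1) (ymap m g) (mid (cube 1))) = aP m (act (expI A) k m g \<gamma>)"
proof (rule ext, rule ext)
  fix p xs
  show "mcomp (cubedom m 1) (aP k \<gamma>) (mprod (cube m) (cube 1) (ymap m g) (mid (cube 1))) p xs = aP m (act (expI A) k m g \<gamma>) p xs"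
  proof (cases "xs \<in> hom m p \<times> hom 1 p")
    case True
    obtain y s where xs: "xs = (y, s)" by force
    have y: "y \<in> hom m p" and s: "s \<in> hom 1 p" using True xs by auto
    have yg: "bcomp y g \<in> hom k p" using bcomp_hom y gh by auto
    have "aP k \<gamma> p (bcomp y g, s) = aP m (act (expI A) k m g \<gamma>) p (y, s)"
    proof (rule ext, rule ext)
      fix q zt
      show "aP k \<gamma> p (bcomp y g, s) q zt = aP m (act (expI A) k m g \<gamma>) p (y, s) q zt"
      proof (cases "zt \<in> hom p q \<times> hom 1 q")
        case True
        obtain z t where zt: "zt = (z, t)" by force
        have z: "z \<in> hom p q" and t: "t \<in> hom 1 q" using True zt by auto
        have zy: "bcomp z y \<in> hom m q" using bcomp_hom z y by auto
        have p2: "pair2 t (bcomp z s) \<in> hom 2 q" using pair2_hom t bcomp_hom z s by auto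
        show ?thesis using z t unfolding zt
          by (simp add: aP_eval[OF yg s] aP_eval[OF y s] F_unif_eval[OF g k m gh zy p2] bcomp_assoc)
      next
        case False
        then show ?thesis by (simp add: aP_eval[OF yg s] aP_eval[OF y s])
      qed
    qed
    then show ?thesis using y s unfolding xs cubedom_cprod by (simp add: mcomp_mprod_eval ymap_eval)
  next
    case False
    then show ?thesis unfolding cubedom_cprod by (simp add: mcomp_mprod_eval aP_def)
  qed
qed

lemma bP_unif:
  assumes gh: "g \<in> hom k m"
  shows "mcomp (boxdom m 1 True) (bP k \<gamma>) (mprod (cube m) (obox 1 True) (ymap m g) (mid (obox 1 True))) = bP m (act (expI A) k m g \<gamma>)"
proof (rule ext, rule ext)
  fix p xs
  show "mcomp (boxdom m 1 True) (bP k \<gamma>) (mprod (cube m) (obox 1 True) (ymap m g) (mid (obox 1 True))) p xs = bP m (act (expI A) k m g \<gamma>) p xs"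
  proof (cases "xs \<in> hom m p \<times> obox_carrier 1 True p")
    case True
    obtain y s where xs: "xs = (y, s)" by force
    have y: "y \<in> hom m p" and s: "s = c0" using True xs by auto
    have yg: "bcomp y g \<in> hom k p" using bcomp_hom y gh by auto
    show ?thesis using y yg unfolding xs s boxdom_cprod
      by (simp add: mcomp_mprod_eval ymap_eval bP_def act_expI_eval)
  next
    case False
    then show ?thesis unfolding boxdom_cprod by (simp add: mcomp_mprod_eval bP_def)
  qed
qed

lemma G_unif_eval:
  assumes g: "\<gamma> \<in> carrier (expI A) k" and k: "1 \<le> k" and m: "1 \<le> m" and gh: "g \<in> hom k m"
    and w: "w \<in> hom m q" and s: "s \<in> hom 1 q"
  shows "G m (act (expI A) k m g \<gamma>) q (w, s) = G k \<gamma> q (bcomp w g, s)"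
proof -
  have e: "mcomp (cubedom m 1) (G k \<gamma>) (mprod (cube m) (cube 1) (ymap m g) (mid (cube 1))) = G m (act (expI A) k m g \<gamma>)"
    using G_facts(3)[OF g k m ymap_morph[OF gh]] aP_unif[OF g k m gh] bP_unif[OF gh] unfolding G_def by simp
  show ?thesis using fun_cong[OF fun_cong[OF e[symmetric], of q], of "(w, s)"] w s unfolding cubedom_cprod
    by (simp add: mcomp_mprod_eval ymap_eval)
qed

lemma G_sec:
  assumes g: "\<gamma> \<in> carrier (expI A) k" and k: "1 \<le> k" and x: "x \<in> hom k m"
  shows "\<pi> m (G k \<gamma> m (x, c1)) = (\<lambda>p yt. if yt \<in> hom m p \<times> hom 1 p then \<gamma> p (bcomp (fst yt) x, snd yt) else undefined)"
proof -
  have "\<pi> m (G k \<gamma> m (x, c1)) = aP k \<gamma> m (x, c1)" using G_facts(2)[OF g k, of "(x, c1)"] x by simp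
  also have "\<dots> = (\<lambda>p yt. if yt \<in> hom m p \<times> hom 1 p then \<gamma> p (bcomp (fst yt) x, snd yt) else undefined)"
  proof (rule ext, rule ext)
    fix p yt
    show "aP k \<gamma> m (x, c1) p yt = (if yt \<in> hom m p \<times> hom 1 p then \<gamma> p (bcomp (fst yt) x, snd yt) else undefined)"
    proof (cases "yt \<in> hom m p \<times> hom 1 p")
      case True
      obtain y t where yt: "yt = (y, t)" by force
      have y: "y \<in> hom m p" and t: "t \<in> hom 1 p" using True yt by auto
      have yx: "bcomp y x \<in> hom k p" using bcomp_hom x y by auto
      have p2: "pair2 t c1 \<in> obox_carrier 2 True p" using pair2_hom[OF t c1_hom] unfolding obox2
        by (simp add: pair2_def c1_def)
      have "pair2 t c1 1 = Top" by (simp add: pair2_def c1_def)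
      then have "F k \<gamma> p (bcomp y x, pair2 t c1) = \<gamma> p (bcomp y x, t)"
        using F_facts(2)[OF g k, of "(bcomp y x, pair2 t c1)"] yx p2 tpart_pair2[OF t] by (simp add: bA_def)
      then show ?thesis using y t unfolding yt by (simp add: aP_eval[OF x c1_hom])
    next
      case False
      then show ?thesis by (simp add: aP_eval[OF x c1_hom])
    qed
  qed
  finally show ?thesis .
qed

definition jj :: "nat \<Rightarrow> 'a path \<Rightarrow> 'b" where
  "jj n \<delta> = (if \<delta> \<in> carrier (expI A) n then G (Suc n) (act (expI A) n (Suc n) (bid n) \<delta>) n (bid n, c1) else undefined)"

lemma lift_car: "\<delta> \<in> carrier (expI A) n \<Longrightarrow> act (expI A) n (Suc n) (bid n) \<delta> \<in> carrier (expI A) (Suc n)"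
  using act_expI_car bid_hom(1)[of n "Suc n"] by auto

lemma jj_sec: "\<delta> \<in> carrier (expI A) n \<Longrightarrow> \<pi> n (jj n \<delta>) = \<delta>"
proof -
  assume d: "\<delta> \<in> carrier (expI A) n"
  have dm: "morphism (cprod (cube n) (cube 1)) A \<delta>" using d by simp
  have "\<pi> n (jj n \<delta>) = (\<lambda>p yt. if yt \<in> hom n p \<times> hom 1 p then act (expI A) n (Suc n) (bid n) \<delta> p (bcomp (fst yt) (bid n), snd yt) else undefined)"
    using G_sec[OF lift_car[OF d] _ bid_hom(2)] d by (simp add: jj_def)
  also have "\<dots> = \<delta>"
  proof (rule ext, rule ext)
    fix p yt
    show "(if yt \<in> hom n p \<times> hom 1 p then act (expI A) n (Suc n) (bid n) \<delta> p (bcomp (fst yt) (bid n), snd yt) else undefined) = \<delta> p yt"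
    proof (cases "yt \<in> hom n p \<times> hom 1 p")
      case True
      obtain y t where yt: "yt = (y, t)" by force
      have y: "y \<in> hom n p" and t: "t \<in> hom 1 p" using True yt by auto
      have yb: "bcomp y (bid n) \<in> hom (Suc n) p" using bcomp_hom[OF bid_hom(2) y] .
      have "bcomp (bcomp y (bid n)) (bid n) = y"
        using bcomp_bid_r[OF y] bcomp_bid_r[OF bid_hom(1)[of n n]] by (simp add: bcomp_assoc[symmetric])
      then show ?thesis using y t yb unfolding yt by (simp add: act_expI_eval)
    next
      case False
      then show ?thesis using morph_undef[OF dm] by auto
    qed
  qed
  finally show ?thesis .
qed

lemma jj_nat:
  assumes g: "g \<in> hom n m" and d: "\<delta> \<in> carrier (expI A) n"
  shows "jj m (act (expI A) n m g \<delta>) = act B n m g (jj n \<delta>)"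
proof -
  define d1 where "d1 = act (expI A) n (Suc n) (bid n) \<delta>"
  have d1c: "d1 \<in> carrier (expI A) (Suc n)" unfolding d1_def using lift_car[OF d] .
  have gd: "act (expI A) n m g \<delta> \<in> carrier (expI A) m" using act_expI_car[OF g d] .
  have ge: "gext n m g \<in> hom (Suc n) (Suc m)" using gext_hom[OF g] .
  have eq: "act (expI A) m (Suc m) (bid m) (act (expI A) n m g \<delta>) = act (expI A) (Suc n) (Suc m) (gext n m g) d1"
  proof (rule ext, rule ext)
    fix p zt
    show "act (expI A) m (Suc m) (bid m) (act (expI A) n m g \<delta>) p zt = act (expI A) (Suc n) (Suc m) (gext n m g) d1 p zt"
    proof (cases "zt \<in> hom (Suc m) p \<times> hom 1 p")
      case True
      obtain z t where zt: "zt = (z, t)" by force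
      have z: "z \<in> hom (Suc m) p" and t: "t \<in> hom 1 p" using True zt by auto
      have zb: "bcomp z (bid m) \<in> hom m p" using bcomp_hom[OF bid_hom(1)[of m "Suc m"] z] by simp
      have zg: "bcomp z (gext n m g) \<in> hom (Suc n) p" using bcomp_hom[OF ge z] .
      have "bcomp (bcomp z (bid m)) g = bcomp (bcomp z (gext n m g)) (bid n)"
        by (simp add: bcomp_assoc[symmetric] bcomp_bid_l[OF g] gext_bid_r[OF g])
      then show ?thesis using z t zb zg unfolding zt d1_def by (simp add: act_expI_eval)
    next
      case False
      then show ?thesis by (simp add: act_expI)
    qed
  qed
  have "jj m (act (expI A) n m g \<delta>) = G (Suc m) (act (expI A) (Suc n) (Suc m) (gext n m g) d1) m (bid m, c1)"
    using gd eq by (simp add: jj_def)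
  also have "\<dots> = G (Suc n) d1 m (bcomp (bid m) (gext n m g), c1)"
    using G_unif_eval[OF d1c _ _ ge bid_hom(2) c1_hom] by simp
  also have "\<dots> = G (Suc n) d1 m (g, c1)" using gext_bid_l[OF g] by simp
  also have "\<dots> = act B n m g (G (Suc n) d1 n (bid n, c1))"
    using morph_nat[OF G_facts(1)[OF d1c] g, of "(bid n, c1)"] bid_hom(2) bcomp_bid_r[OF g] by simp
  also have "\<dots> = act B n m g (jj n \<delta>)" using d by (simp add: jj_def d1_def)
  finally show ?thesis .
qed

lemma jj_morph: "morphism (expI A) B jj"
  unfolding morphism_def
proof (intro conjI allI impI)
  fix m x assume x: "x \<in> carrier (expI A) m"
  then show "jj m x \<in> carrier B m"
    using morph_car[OF G_facts(1)[OF lift_car[OF x]], of "(bid m, c1)" m] bid_hom(2) by (simp add: jj_def)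
next
  fix m n f x assume "f \<in> hom m n" "x \<in> carrier (expI A) m"
  then show "jj n (act (expI A) m n f x) = act B m n f (jj m x)" using jj_nat by blast
next
  fix m x assume "x \<notin> carrier (expI A) m"
  then show "jj m x = undefined" by (simp add: jj_def)
qed

lemma jj_main: "morphism (expI A) B jj \<and> mcomp (expI A) \<pi> jj = mid (expI A)"
  using jj_morph jj_sec by (auto simp: mcomp_def mid_def intro!: ext)

end

theorem proposition3p6:
  fixes A :: "'a cset" and B :: "'b cset"
    and \<pi> :: "nat \<Rightarrow> 'b \<Rightarrow> 'a path" and b :: "nat \<Rightarrow> 'a \<Rightarrow> 'b"
  assumes "is_cset A" and "is_cset B"
    and "uniform_kan_complex A"
    and "uniform_kan_fibration (expI A) B \<pi>"
    and "morphism A B b"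
    and "mcomp A \<pi> b = constpath A"
  shows "\<exists>j. morphism (expI A) B j \<and> mcomp (expI A) \<pi> j = mid (expI A)"
proof -
  obtain PA where PA: "ukf_structure terminal A (to_terminal A) PA"
    using assms(3) unfolding uniform_kan_complex_def uniform_kan_fibration_def by blast
  obtain PB where PB: "ukf_structure (expI A) B \<pi> PB" and mpi: "morphism B (expI A) \<pi>"
    using assms(4) unfolding uniform_kan_fibration_def by blast
  interpret P36 A B \<pi> b PA PB
    using PA PB mpi assms(5,6) by unfold_locales
  show ?thesis using jj_main by blast
qed

end
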